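(* Let $p\geq5$ be a prime, $E\cong E_9$, $P$ of order $p$, $G=E\times P$. Let $\mathcal{A}$ be an $S$-ring over $G$ with $\mathcal{A}\cong_{\mathrm{Cay}}\mathcal{A}_i(M)$ for some $i\in\{1,\dots,11\}\setminus\{1,7,8\}$ and some $M\leq\mathrm{Aut}(P)$ such that $\mathcal{A}_i(M)$ is well-defined. Suppose $X,Y\in\mathcal{S}(\mathcal{A})$, $\langle X\rangle=\langle Y\rangle=G$ and $|X|=|Y|$. Then $X$ and $Y$ are rationally conjugate.
   Context: For a finite group $G$ with identity $e$ and $X\subseteq G$ write $\underline{X}=\sum_{x\in X}x$. An $S$-ring over $G$ is a subring $\mathcal{A}\subseteq\mathbb{Z}G$ spanned by $\{\underline{X}:X\in\mathcal{S}(\mathcal{A})\}$ for a partition $\mathcal{S}(\mathcal{A})$ of $G$ (basic sets) containing $\{e\}$ and closed under inversion. A Cayley isomorphism between $S$-rings $\mathcal{A},\mathcal{A}'$ over $G,G'$ is a group isomorphism $f:G\to G'$ with $\mathcal{S}(\mathcal{A})^f=\mathcal{S}(\mathcal{A}')$ (written $\cong_{\mathrm{Cay}}$). $X,Y\subseteq G$ are rationally conjugate if $Y=\{x^m:x\in X\}$ for some integer $m$ coprime to $|G|$. For $K\leq\mathrm{Aut}(G)$, $\mathrm{Cyc}(K,G)$ is the $S$-ring whose basic sets are the $K$-orbits. Write $E=\langle a\rangle\times\langle b\rangle$. For $K_0\trianglelefteq K\leq\mathrm{Aut}(E)$, $M_0\trianglelefteq M\leq\mathrm{Aut}(P)$ and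 an isomorphism $\psi:K/K_0\to M/M_0$, $W(K,K_0,M,M_0,\psi)=\{(\alpha,\beta)\in K\times M:\psi(\alpha K_0)=\beta M_0\}\leq\mathrm{Aut}(E\times P)$. The pairs $(K,K_0)$ number $1$–$11$ are (automorphisms given by images of $(a,b)$): 1. $K=\langle(a^2,b^2)\rangle$, $K_0=1$; 2. $K=\langle(a^2,b),(a,b^2)\rangle$, $K_0=\langle(a^2,b^2)\rangle$; 3. $K=\langle(a,ab)\rangle$, $K_0=1$; 4. $K=\langle(a^2,ab^2)\rangle$, $K_0=\langle(a^2,b^2)\rangle$; 5. $K=\langle(a^2,ab^2)\rangle$, $K_0=1$; 6. $K=\langle(b^2,a),(b,a)\rangle$, $K_0=\langle(a^2,b^2),(a^2,b)\rangle$; 7. $K=\langle(b^2,a)\rangle$, $K_0=\langle(a^2,b^2)\rangle$; 8. $K=\langle(b^2,a)\rangle$, $K_0=1$; 9. $K=\langle(ab,a^2b)\rangle$, $K_0=\langle(b^2,a)\rangle$; 10. $K=\langle(ab,a^2b)\rangle$, $K_0=\langle(a^2,b^2)\rangle$; 11. $K=\langle(ab,a^2b)\rangle$, $K_0=1$. $\mathcal{A}_i(M)$ is well-defined if $|K:K_0|$ divides $|M|$ for the pair of line $i$; then $M_0$ is the unique subgroup of the cyclic group $M$ with $M/M_0\cong K/K_0$ and $\mathcal{A}_i(M)=\mathrm{Cyc}(W(K,K_0,M,M_0,\psi_0),G)$ for a fixed isomorphism $\psi_0$ (different choices give Cayley isomorphic $S$-rings). *)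

theory Defs
  imports "HOL-Computational_Algebra.Primes"
begin

text \<open>Concrete model: E = Z3 x Z3 written additively with a = (1,0), b = (0,1);
  P = Z_p; G = E x P, elements (x,y,z) with 0 <= x,y < 3, 0 <= z < p.\<close>

type_synonym eE = "int \<times> int"
type_synonym elt = "int \<times> int \<times> int"
type_synonym autE = "eE \<times> eE"  \<comment> \<open>automorphism of E given by the images of (a,b)\<close>

definition Ecar :: "eE set" where
  "Ecar = {(x,y). 0 \<le> x \<and> x < 3 \<and> 0 \<le> y \<and> y < 3}"

definition addE :: "eE \<Rightarrow> eE \<Rightarrow> eE" where
  "addE u v = ((fst u + fst v) mod 3, (snd u + snd v) mod 3)"

definition scalE :: "int \<Rightarrow> eE \<Rightarrow> eE" where
  "scalE n u = ((n * fst u) mod 3, (n * snd u) mod 3)"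

definition appE :: "autE \<Rightarrow> eE \<Rightarrow> eE" where
  "appE \<alpha> u = addE (scalE (fst u) (fst \<alpha>)) (scalE (snd u) (snd \<alpha>))"

definition compE :: "autE \<Rightarrow> autE \<Rightarrow> autE" where
  "compE \<alpha> \<beta> = (appE \<alpha> (fst \<beta>), appE \<alpha> (snd \<beta>))"

definition idE :: autE where "idE = ((1,0),(0,1))"

text \<open>Subgroup of Aut(E) generated by a set of automorphisms (finite group, so
  closure under composition suffices).\<close>
inductive_set genE :: "autE set \<Rightarrow> autE set" for S where
  genE_id: "idE \<in> genE S"
| genE_gen: "s \<in> S \<Longrightarrow> s \<in> genE S"
| genE_comp: "\<alpha> \<in> genE S \<Longrightarrow> \<beta> \<in> genE S \<Longrightarrow> compE \<alpha> \<beta> \<in> genE S"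

text \<open>The pairs (K,K0) numbered 1--11.  a = (1,0), b = (0,1), a^2 = (2,0), b^2 = (0,2),
  ab = (1,1), a^2 b = (2,1), a b^2 = (1,2).\<close>
definition KK0 :: "nat \<Rightarrow> autE set \<times> autE set" where
  "KK0 i = (if i = 1 then (genE {((2,0),(0,2))}, genE {})
    else if i = 2 then (genE {((2,0),(0,1)), ((1,0),(0,2))}, genE {((2,0),(0,2))})
    else if i = 3 then (genE {((1,0),(1,1))}, genE {})
    else if i = 4 then (genE {((2,0),(1,2))}, genE {((2,0),(0,2))})
    else if i = 5 then (genE {((2,0),(1,2))}, genE {})
    else if i = 6 then (genE {((0,2),(1,0)), ((0,1),(1,0))}, genE {((2,0),(0,2)), ((2,0),(0,1))})
    else if i = 7 then (genE {((0,2),(1,0))}, genE {((2,0),(0,2))})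
    else if i = 8 then (genE {((0,2),(1,0))}, genE {})
    else if i = 9 then (genE {((1,1),(2,1))}, genE {((0,2),(1,0))})
    else if i = 10 then (genE {((1,1),(2,1))}, genE {((2,0),(0,2))})
    else if i = 11 then (genE {((1,1),(2,1))}, genE {})
    else ({}, {}))"

text \<open>Automorphisms of P = Z_p: z \<mapsto> m z, represented by m \<in> {1..p-1};
  composition is multiplication mod p.\<close>
definition AutP_subgroup :: "int \<Rightarrow> int set \<Rightarrow> bool" where
  "AutP_subgroup p M \<longleftrightarrow> M \<subseteq> {1..p-1} \<and> 1 \<in> M \<and> (\<forall>m\<in>M. \<forall>n\<in>M. (m * n) mod p \<in> M)"

definition cosetE :: "autE set \<Rightarrow> autE \<Rightarrow> autE set" where
  "cosetE K0 \<alpha> = {compE \<alpha> \<kappa> | \<kappa>. \<kappa> \<in> K0}"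
definition quotE :: "autE set \<Rightarrow> autE set \<Rightarrow> autE set set" where
  "quotE K K0 = {cosetE K0 \<alpha> | \<alpha>. \<alpha> \<in> K}"
definition setmulE :: "autE set \<Rightarrow> autE set \<Rightarrow> autE set" where
  "setmulE A B = {compE x y | x y. x \<in> A \<and> y \<in> B}"

definition cosetP :: "int \<Rightarrow> int set \<Rightarrow> int \<Rightarrow> int set" where
  "cosetP p M0 m = {(m * n) mod p | n. n \<in> M0}"
definition quotP :: "int \<Rightarrow> int set \<Rightarrow> int set \<Rightarrow> int set set" where
  "quotP p M M0 = {cosetP p M0 m | m. m \<in> M}"
definition setmulP :: "int \<Rightarrow> int set \<Rightarrow> int set \<Rightarrow> int set" where
  "setmulP p A B = {(x * y) mod p | x y. x \<in> A \<and> y \<in> B}"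

definition quot_iso :: "int \<Rightarrow> autE set \<Rightarrow> autE set \<Rightarrow> int set \<Rightarrow> int set
    \<Rightarrow> (autE set \<Rightarrow> int set) \<Rightarrow> bool" where
  "quot_iso p K K0 M M0 \<psi> \<longleftrightarrow> bij_betw \<psi> (quotE K K0) (quotP p M M0) \<and>
     (\<forall>A\<in>quotE K K0. \<forall>B\<in>quotE K K0. \<psi> (setmulE A B) = setmulP p (\<psi> A) (\<psi> B))"

definition W :: "int \<Rightarrow> autE set \<Rightarrow> autE set \<Rightarrow> int set \<Rightarrow> int set
    \<Rightarrow> (autE set \<Rightarrow> int set) \<Rightarrow> (autE \<times> int) set" where
  "W p K K0 M M0 \<psi> = {(\<alpha>, m). \<alpha> \<in> K \<and> m \<in> M \<and> \<psi> (cosetE K0 \<alpha>) = cosetP p M0 m}"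

definition Gcar :: "int \<Rightarrow> elt set" where
  "Gcar p = {(x,y,z). 0 \<le> x \<and> x < 3 \<and> 0 \<le> y \<and> y < 3 \<and> 0 \<le> z \<and> z < p}"

definition gmul :: "int \<Rightarrow> elt \<Rightarrow> elt \<Rightarrow> elt" where
  "gmul p g h = ((fst g + fst h) mod 3, (fst (snd g) + fst (snd h)) mod 3,
                 (snd (snd g) + snd (snd h)) mod p)"

definition gunit :: elt where "gunit = (0,0,0)"

definition ginv :: "int \<Rightarrow> elt \<Rightarrow> elt" where
  "ginv p g = ((- fst g) mod 3, (- fst (snd g)) mod 3, (- snd (snd g)) mod p)"

definition gpow :: "int \<Rightarrow> int \<Rightarrow> elt \<Rightarrow> elt" where
  "gpow p m g = ((m * fst g) mod 3, (m * fst (snd g)) mod 3, (m * snd (snd g)) mod p)"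

definition actW :: "int \<Rightarrow> autE \<times> int \<Rightarrow> elt \<Rightarrow> elt" where
  "actW p w g = (let e = appE (fst w) (fst g, fst (snd g)) in
                 (fst e, snd e, (snd w * snd (snd g)) mod p))"

definition Cyc :: "int \<Rightarrow> (autE \<times> int) set \<Rightarrow> elt set set" where
  "Cyc p K = {{actW p w g | w. w \<in> K} | g. g \<in> Gcar p}"

text \<open>Basic sets of A_i(M) (for some admissible M0 and isomorphism psi; M0 is
  unique and the choice of psi does not matter up to Cayley isomorphism).\<close>
definition Ai_basic :: "int \<Rightarrow> nat \<Rightarrow> int set \<Rightarrow> elt set set \<Rightarrow> bool" where
  "Ai_basic p i M T \<longleftrightarrow> (\<exists>M0 \<psi>. AutP_subgroup p M0 \<and> M0 \<subseteq> M \<and>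
      quot_iso p (fst (KK0 i)) (snd (KK0 i)) M M0 \<psi> \<and>
      T = Cyc p (W p (fst (KK0 i)) (snd (KK0 i)) M M0 \<psi>))"

definition Ai_well_defined :: "int \<Rightarrow> nat \<Rightarrow> int set \<Rightarrow> bool" where
  "Ai_well_defined p i M \<longleftrightarrow> card (quotE (fst (KK0 i)) (snd (KK0 i))) dvd card M"

definition gaut :: "int \<Rightarrow> (elt \<Rightarrow> elt) \<Rightarrow> bool" where
  "gaut p f \<longleftrightarrow> bij_betw f (Gcar p) (Gcar p) \<and>
     (\<forall>g\<in>Gcar p. \<forall>h\<in>Gcar p. f (gmul p g h) = gmul p (f g) (f h))"

text \<open>S-ring over G given by its set of basic sets: a partition of G containing {e},
  closed under inversion, whose span is closed under multiplication (XY is a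
  Z-combination of basic sets, i.e. the coefficient of z in XY is constant on each
  basic set).\<close>
definition is_Sring :: "int \<Rightarrow> elt set set \<Rightarrow> bool" where
  "is_Sring p S \<longleftrightarrow>
     (\<forall>X\<in>S. X \<noteq> {} \<and> X \<subseteq> Gcar p) \<and> \<Union>S = Gcar p \<and>
     (\<forall>X\<in>S. \<forall>Y\<in>S. X \<noteq> Y \<longrightarrow> X \<inter> Y = {}) \<and>
     {gunit} \<in> S \<and> (\<forall>X\<in>S. ginv p ` X \<in> S) \<and>
     (\<forall>X\<in>S. \<forall>Y\<in>S. \<forall>Z\<in>S. \<forall>z\<in>Z. \<forall>z'\<in>Z.
        card {(x,y). x \<in> X \<and> y \<in> Y \<and> gmul p x y = z} =
        card {(x,y). x \<in> X \<and> y \<in> Y \<and> gmul p x y = z'})"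

definition cay_iso_Ai :: "int \<Rightarrow> elt set set \<Rightarrow> nat \<Rightarrow> int set \<Rightarrow> bool" where
  "cay_iso_Ai p S i M \<longleftrightarrow> (\<exists>f T. gaut p f \<and> Ai_basic p i M T \<and> (\<lambda>X. f ` X) ` S = T)"

text \<open>Subgroup of G generated by X (finite group: closure under products).\<close>
inductive_set gen :: "int \<Rightarrow> elt set \<Rightarrow> elt set" for p X where
  gen_unit: "gunit \<in> gen p X"
| gen_base: "x \<in> X \<Longrightarrow> x \<in> gen p X"
| gen_mul: "g \<in> gen p X \<Longrightarrow> h \<in> gen p X \<Longrightarrow> gmul p g h \<in> gen p X"

definition rat_conj :: "int \<Rightarrow> elt set \<Rightarrow> elt set \<Rightarrow> bool" where
  "rat_conj p X Y \<longleftrightarrow> (\<exists>m::int. coprime m (int (card (Gcar p))) \<and> Y = gpow p m ` X)"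

end

theory Submission
  imports Defs
begin


definition orb :: "int \<Rightarrow> (autE \<times> int) set \<Rightarrow> elt \<Rightarrow> elt set" where
  "orb p Wg g = {actW p w g | w. w \<in> Wg}"

lemma Cyc_orb: "Cyc p Wg = orb p Wg ` Gcar p"
  unfolding Cyc_def orb_def by auto

lemma Gcar_mem: "(x,y,z) \<in> Gcar p \<longleftrightarrow> 0 \<le> x \<and> x < 3 \<and> 0 \<le> y \<and> y < 3 \<and> 0 \<le> z \<and> z < p"
  by (simp add: Gcar_def)

lemma gmul_in: "p > 0 \<Longrightarrow> gmul p g h \<in> Gcar p"
  by (simp add: gmul_def Gcar_def)

lemma gpow_in: "p > 0 \<Longrightarrow> gpow p m g \<in> Gcar p"
  by (simp add: gpow_def Gcar_def)

lemma actW_in: "p > 0 \<Longrightarrow> actW p w g \<in> Gcar p"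
  by (simp add: actW_def Gcar_def appE_def addE_def Let_def)

lemma orb_sub: "p > 0 \<Longrightarrow> orb p Wg g \<subseteq> Gcar p"
  by (auto simp: orb_def actW_in)

lemma Gcar_prod: "Gcar p = {0..<3} \<times> {0..<3} \<times> {0..<p}"
  by (auto simp: Gcar_def)

lemma Gcar_finite: "finite (Gcar p)"
  by (simp add: Gcar_prod)

lemma Gcar_card: "p > 0 \<Longrightarrow> int (card (Gcar p)) = 9 * p"
  by (simp add: Gcar_prod card_cartesian_product)

lemma gen_closed:
  assumes "gunit \<in> C" "\<forall>g\<in>C. \<forall>h\<in>C. gmul p g h \<in> C" "X \<subseteq> C"
  shows "gen p X \<subseteq> C"
proof
  fix x assume "x \<in> gen p X" then show "x \<in> C"
    by induction (use assms in auto)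
qed

lemma gen_sub: "p > 0 \<Longrightarrow> X \<subseteq> Gcar p \<Longrightarrow> gen p X \<subseteq> Gcar p"
  by (rule gen_closed) (use gmul_in[of p] in \<open>auto simp: gunit_def Gcar_def\<close>)

lemma gpow_actW: "gpow p m (actW p w g) = actW p w (gpow p m g)"
  by (simp add: gpow_def actW_def appE_def addE_def scalE_def Let_def mod_simps algebra_simps)

lemma orb_img: "orb p Wg g = (\<lambda>w. actW p w g) ` Wg"
  unfolding orb_def by blast

lemma gpow_orb: "gpow p m ` orb p Wg g = orb p Wg (gpow p m g)"
  unfolding orb_img image_image gpow_actW ..

lemma double_mod_zero:
  fixes a q :: int
  assumes "0 \<le> a" "a < q" "a = (a + a) mod q"
  shows "a = 0"
proof (cases "a + a < q")
  case True
  then have "(a + a) mod q = a + a" using assms by simp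
  then show ?thesis using assms by simp
next
  case False
  have "(a + a) mod q = (a + a - q + q) mod q" by simp
  also have "\<dots> = (a + a - q) mod q" by (simp only: mod_add_self2)
  also have "\<dots> = a + a - q" using False assms by (intro mod_pos_pos_trivial) auto
  finally show ?thesis using assms by simp
qed

lemma gaut_unit:
  assumes "p > 0" "gaut p f"
  shows "f gunit = gunit"
proof -
  have u: "gunit \<in> Gcar p" using assms by (simp add: gunit_def Gcar_def)
  have "gmul p gunit gunit = gunit" by (simp add: gmul_def gunit_def)
  then have "f gunit = gmul p (f gunit) (f gunit)"
    using assms u unfolding gaut_def by metis
  moreover have "f gunit \<in> Gcar p" using assms u unfolding gaut_def bij_betw_def by blast
  ultimately show ?thesis
    by (cases "f gunit") (auto simp: gmul_def Gcar_def gunit_def intro: double_mod_zero)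
qed

lemma gpow_Suc: "gpow p (int (Suc k)) x = gmul p (gpow p (int k) x) x"
  by (simp add: gpow_def gmul_def mod_simps algebra_simps)

lemma gpow_0: "gpow p 0 x = gunit"
  by (simp add: gpow_def gunit_def)

lemma gaut_pow:
  assumes "p > 0" "gaut p f" "x \<in> Gcar p"
  shows "f (gpow p (int k) x) = gpow p (int k) (f x)"
proof (induction k)
  case 0
  then show ?case using gaut_unit[OF assms(1,2)] by (simp add: gpow_0)
next
  case (Suc k)
  have fx: "f x \<in> Gcar p" using assms unfolding gaut_def bij_betw_def by blast
  have "f (gpow p (int (Suc k)) x) = f (gmul p (gpow p (int k) x) x)" by (simp only: gpow_Suc)
  also have "\<dots> = gmul p (f (gpow p (int k) x)) (f x)"
    using assms gpow_in[OF assms(1)] unfolding gaut_def by blast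
  also have "\<dots> = gpow p (int (Suc k)) (f x)" using Suc by (simp only: gpow_Suc)
  finally show ?case .
qed

lemma gaut_gen:
  assumes "p > 0" "gaut p f" "X \<subseteq> Gcar p"
  shows "f ` gen p X \<subseteq> gen p (f ` X)"
proof -
  have "x \<in> gen p X \<Longrightarrow> f x \<in> gen p (f ` X)" for x
  proof (induction rule: gen.induct)
    case gen_unit
    then show ?case using gaut_unit[OF assms(1,2)] by (simp add: gen.gen_unit)
  next
    case (gen_base x)
    then show ?case by (simp add: gen.gen_base)
  next
    case (gen_mul g h)
    have "g \<in> Gcar p" "h \<in> Gcar p" using gen_mul gen_sub[OF assms(1,3)] by auto
    then have "f (gmul p g h) = gmul p (f g) (f h)" using assms unfolding gaut_def by blast
    then show ?case using gen_mul by (simp add: gen.gen_mul)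
  qed
  then show ?thesis by blast
qed



lemma coprime_3:
  fixes m :: int
  assumes "m mod 3 = 1 \<or> m mod 3 = 2"
  shows "coprime m 3"
proof -
  have "coprime (m mod 3) 3"
  proof (rule coprimeI)
    fix c assume c: "c dvd m mod 3" "c dvd 3"
    show "is_unit c"
    proof (cases "m mod 3 = 1")
      case True then show ?thesis using c by simp
    next
      case False
      then have "m mod 3 = 2" using assms by simp
      then have "c dvd 3 - 2" using c by (metis dvd_diff)
      then show ?thesis by simp
    qed
  qed
  then show ?thesis by simp
qed

lemma not_dvd_range:
  fixes p a :: int
  assumes "0 < a" "a < p"
  shows "\<not> p dvd a"
  using assms zdvd_imp_le by force

lemma main_T:
  fixes p :: int and Wg :: "(autE \<times> int) set" and K :: "autE set" and M :: "int set"
  assumes pr: "prime p" and p5: "p \<ge> 5"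
  and Msub: "M \<subseteq> {1..p-1}"
  and P2: "\<forall>\<alpha>\<in>K. \<exists>n\<in>M. (\<alpha>,n) \<in> Wg"
  and idK: "idE \<in> K"
  and disj: "\<forall>A\<in>Cyc p Wg. \<forall>B\<in>Cyc p Wg. A \<inter> B \<noteq> {} \<longrightarrow> A = B"
  and gX: "gX = (x1,y1,z1)" "gX \<in> Gcar p" and gY: "gY = (x2,y2,z2)" "gY \<in> Gcar p"
  and zX: "z1 \<noteq> 0" and zY: "z2 \<noteq> 0"
  and ga: "\<gamma> \<in> K" "\<epsilon> \<in> {1,2}" "(x2,y2) = appE \<gamma> (scalE \<epsilon> (x1,y1))"
  shows "\<exists>m\<ge>0. coprime m (9*p) \<and> orb p Wg gY = gpow p m ` orb p Wg gX"
proof -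
  have p0: "p > 1" using p5 by simp
  obtain n1 where n1: "n1 \<in> M" "(idE,n1) \<in> Wg" using P2 idK by blast
  obtain n where n: "n \<in> M" "(\<gamma>,n) \<in> Wg" using P2 ga(1) by blast
  have r1: "0 \<le> x1" "x1 < 3" "0 \<le> y1" "y1 < 3" "0 \<le> z1" "z1 < p" using gX by (auto simp: Gcar_def)
  have r2: "0 \<le> x2" "x2 < 3" "0 \<le> y2" "y2 < 3" "0 \<le> z2" "z2 < p" using gY by (auto simp: Gcar_def)
  have nr: "0 < n" "n < p" "0 < n1" "n1 < p" using n(1) n1(1) Msub by auto
  have nd1: "\<not> p dvd (n*z1)"
    using pr nr r1 zX not_dvd_range[of n p] not_dvd_range[of z1 p] by (auto simp: prime_dvd_mult_iff)
  have nd2: "\<not> p dvd (n1*z2)"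
    using pr nr r2 zY not_dvd_range[of n1 p] not_dvd_range[of z2 p] by (auto simp: prime_dvd_mult_iff)
  have cop: "coprime (n*z1) p" using prime_imp_coprime[OF pr nd1] by (simp add: ac_simps)
  obtain u v where uv: "u * (n*z1) + v * p = gcd (n*z1) p" using bezout_int by blast
  then have uv1: "u * (n*z1) + v * p = 1" using cop by (simp add: coprime_iff_gcd_eq_1)
  have hu: "(u * (n*z1)) mod p = 1"
  proof -
    have "u * (n*z1) = 1 + (- v) * p" using uv1 by simp
    then have "(u * (n*z1)) mod p = (1 + (- v) * p) mod p" by simp
    also have "\<dots> = 1 mod p" by (rule mod_mult_self1)
    also have "\<dots> = 1" using p0 by simp
    finally show ?thesis .
  qed
  define c where "c = (n1*z2*u) mod p"
  define t where "t = ((\<epsilon> - c)*p) mod 3"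
  define m where "m = c + p*t"
  have c0: "0 \<le> c" "c < p" using p0 by (auto simp: c_def)
  have m0: "m \<ge> 0" using c0 p0 by (simp add: m_def t_def)
  have p3: "p mod 3 \<noteq> 0"
  proof
    assume "p mod 3 = 0"
    then have "3 dvd p" by auto
    then have "(3::int) = 1 \<or> 3 = p" using pr unfolding prime_int_iff by (metis zero_le_numeral)
    then show False using p5 by auto
  qed
  obtain j where j: "p*p = 3*j + 1"
  proof -
    have "p mod 3 = 1 \<or> p mod 3 = 2" using p3 by auto
    then show ?thesis
    proof
      assume "p mod 3 = 1"
      then obtain k where k: "p = 3*k + 1" by (metis div_mult_mod_eq add.commute mult.commute)
      have "p*p = 3*(3*k*k + 2*k) + 1" unfolding k by (simp add: algebra_simps)
      then show ?thesis using that by blast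
    next
      assume "p mod 3 = 2"
      then obtain k where k: "p = 3*k + 2" by (metis div_mult_mod_eq add.commute mult.commute)
      have "p*p = 3*(3*k*k + 4*k + 1) + 1" unfolding k by (simp add: algebra_simps)
      then show ?thesis using that by blast
    qed
  qed
  have hm3: "m mod 3 = \<epsilon> mod 3"
  proof -
    have "m mod 3 = (c + p*((\<epsilon> - c)*p)) mod 3" unfolding m_def t_def by (metis mod_add_right_eq mod_mult_right_eq)
    also have "c + p*((\<epsilon> - c)*p) = \<epsilon> + 3*(j*(\<epsilon> - c))"
    proof -
      have "c + p*((\<epsilon> - c)*p) = c + (\<epsilon> - c)*(p*p)" by (simp add: algebra_simps)
      also have "\<dots> = \<epsilon> + 3*(j*(\<epsilon> - c))" using j by (simp add: algebra_simps)
      finally show ?thesis .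
    qed
    also have "(\<epsilon> + 3*(j*(\<epsilon> - c))) mod 3 = \<epsilon> mod 3" by simp
    finally show ?thesis .
  qed
  have hmp: "m mod p = c" using c0 by (simp add: m_def)
  have hsc: "scalE m (x1,y1) = scalE \<epsilon> (x1,y1)"
  proof -
    have "(m * x1) mod 3 = (\<epsilon> * x1) mod 3" "(m * y1) mod 3 = (\<epsilon> * y1) mod 3"
      by (metis hm3 mod_mult_left_eq)+
    then show ?thesis by (simp add: scalE_def)
  qed
  define q where "q = (x2, y2, (n1*z2) mod p)"
  have q1: "q \<in> orb p Wg gY"
  proof -
    have "actW p (idE,n1) gY = q"
      using r2 by (simp add: q_def gY actW_def appE_def addE_def scalE_def idE_def)
    then show ?thesis using n1 unfolding orb_def by blast
  qed
  have hP: "(n * ((m*z1) mod p)) mod p = (n1*z2) mod p"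
  proof -
    have "(n * ((m*z1) mod p)) mod p = (n*(m*z1)) mod p" by (rule mod_mult_right_eq)
    also have "\<dots> = (m*(n*z1)) mod p" by (simp add: ac_simps)
    also have "\<dots> = ((m mod p)*(n*z1)) mod p" by (rule mod_mult_left_eq[symmetric])
    also have "\<dots> = (((n1*z2*u) mod p)*(n*z1)) mod p" by (simp add: hmp c_def)
    also have "\<dots> = ((n1*z2*u)*(n*z1)) mod p" by (rule mod_mult_left_eq)
    also have "\<dots> = ((n1*z2) * (u*(n*z1))) mod p" by (simp add: ac_simps)
    also have "\<dots> = ((n1*z2) * ((u*(n*z1)) mod p)) mod p" by (rule mod_mult_right_eq[symmetric])
    also have "\<dots> = (n1*z2) mod p" by (simp add: hu)
    finally show ?thesis .
  qed
  have q2: "q \<in> orb p Wg (gpow p m gX)"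
  proof -
    have "actW p (\<gamma>,n) (gpow p m gX) = q"
      using hP hsc ga(3) by (simp add: q_def gX actW_def gpow_def scalE_def[of m] Let_def) (metis fst_conv snd_conv)
    then show ?thesis using n unfolding orb_def by blast
  qed
  have inC1: "orb p Wg gY \<in> Cyc p Wg" unfolding Cyc_orb using gY(2) by (rule imageI)
  have "gpow p m gX \<in> Gcar p" using p0 by (intro gpow_in) simp
  then have inC2: "orb p Wg (gpow p m gX) \<in> Cyc p Wg" unfolding Cyc_orb by (rule imageI)
  have "orb p Wg gY \<inter> orb p Wg (gpow p m gX) \<noteq> {}" using q1 q2 by blast
  then have "orb p Wg gY = orb p Wg (gpow p m gX)" using disj inC1 inC2 by blast
  then have eq: "orb p Wg gY = gpow p m ` orb p Wg gX" by (simp add: gpow_orb)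
  have cnz: "c \<noteq> 0"
  proof
    assume "c = 0"
    then have "m mod p = 0" using hmp by simp
    then have "((m mod p)*z1) mod p = 0" by simp
    then have "(m*z1) mod p = 0" by (simp only: mod_mult_left_eq)
    then have "(n1*z2) mod p = 0" using hP by simp
    then show False using nd2 by auto
  qed
  have "\<not> p dvd m" using hmp cnz by (auto simp: dvd_eq_mod_eq_0)
  then have cp: "coprime m p" using prime_imp_coprime[OF pr] by (simp add: ac_simps)
  have "m mod 3 = 1 \<or> m mod 3 = 2" using hm3 ga(2) by auto
  then have c3: "coprime m 3" by (rule coprime_3)
  have "coprime m (3*3)" using c3 coprime_mult_right_iff by blast
  then have "coprime m 9" by simp
  then have "coprime m (9*p)" using cp coprime_mult_right_iff by blast
  then show ?thesis using eq m0 by blast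
qed



definition stepE :: "autE set \<Rightarrow> autE set \<Rightarrow> autE set" where
  "stepE S L = L \<union> (\<Union>s\<in>S. compE s ` L)"

lemma stepE_sub: "L \<subseteq> genE S \<Longrightarrow> stepE S L \<subseteq> genE S"
  unfolding stepE_def by (blast intro: genE_comp genE_gen)

lemma stepE_pow: "(stepE S ^^ n) {idE} \<subseteq> genE S"
  by (induction n) (auto simp: genE.genE_id stepE_sub)

lemma genE_eq:
  assumes "L \<subseteq> (stepE S ^^ n) {idE}" "idE \<in> L" "S \<subseteq> L" "\<forall>x\<in>L. \<forall>y\<in>L. compE x y \<in> L"
  shows "genE S = L"
proof
  show "genE S \<subseteq> L"
  proof
    fix x assume "x \<in> genE S" then show "x \<in> L"
      by induction (use assms in auto)
  qed
  show "L \<subseteq> genE S" using assms(1) stepE_pow by blast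
qed

definition K2L :: "autE set" where
  "K2L = {((1, 0), (0, 1)), ((1, 0), (0, 2)), ((2, 0), (0, 1)), ((2, 0), (0, 2))}"
definition K3L :: "autE set" where
  "K3L = {((1, 0), (0, 1)), ((1, 0), (1, 1)), ((1, 0), (2, 1))}"
definition K4L :: "autE set" where
  "K4L = {((1, 0), (0, 1)), ((1, 0), (1, 1)), ((1, 0), (2, 1)), ((2, 0), (0, 2)), ((2, 0), (1, 2)), ((2, 0), (2, 2))}"
definition K6L :: "autE set" where
  "K6L = {((0, 1), (1, 0)), ((0, 1), (2, 0)), ((0, 2), (1, 0)), ((0, 2), (2, 0)), ((1, 0), (0, 1)), ((1, 0), (0, 2)), ((2, 0), (0, 1)), ((2, 0), (0, 2))}"
definition K06L :: "autE set" where
  "K06L = {((1, 0), (0, 1)), ((1, 0), (0, 2)), ((2, 0), (0, 1)), ((2, 0), (0, 2))}"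
definition K9L :: "autE set" where
  "K9L = {((0, 1), (2, 0)), ((0, 2), (1, 0)), ((1, 0), (0, 1)), ((1, 1), (2, 1)), ((1, 2), (1, 1)), ((2, 0), (0, 2)), ((2, 1), (2, 2)), ((2, 2), (1, 2))}"

lemma K2: "genE {((2,0),(0,1)), ((1,0),(0,2))} = K2L"
  by (rule genE_eq[where n=2]; simp only: K2L_def stepE_def; code_simp)
lemma K3: "genE {((1,0),(1,1))} = K3L"
  by (rule genE_eq[where n=2]; simp only: K3L_def stepE_def; code_simp)
lemma K4: "genE {((2,0),(1,2))} = K4L"
  by (rule genE_eq[where n=5]; simp only: K4L_def stepE_def; code_simp)
lemma K6: "genE {((0,2),(1,0)), ((0,1),(1,0))} = K6L"
  by (rule genE_eq[where n=3]; simp only: K6L_def stepE_def; code_simp)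
lemma K06: "genE {((2,0),(0,2)), ((2,0),(0,1))} = K06L"
  by (rule genE_eq[where n=2]; simp only: K06L_def stepE_def; code_simp)
lemma K9: "genE {((1,1),(2,1))} = K9L"
  by (rule genE_eq[where n=7]; simp only: K9L_def stepE_def; code_simp)

lemma KK0_2: "fst (KK0 2) = K2L" by (simp add: KK0_def K2)
lemma KK0_3: "fst (KK0 3) = K3L" by (simp add: KK0_def K3)
lemma KK0_4: "fst (KK0 4) = K4L" by (simp add: KK0_def K4)
lemma KK0_5: "fst (KK0 5) = K4L" by (simp add: KK0_def K4)
lemma KK0_6: "fst (KK0 6) = K6L" "snd (KK0 6) = K06L" by (simp_all add: KK0_def K6 K06)
lemma KK0_9: "fst (KK0 9) = K9L" by (simp add: KK0_def K9)
lemma KK0_10: "fst (KK0 10) = K9L" by (simp add: KK0_def K9)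
lemma KK0_11: "fst (KK0 11) = K9L" by (simp add: KK0_def K9)

definition EcarL :: "eE set" where
  "EcarL = {(0,0),(0,1),(0,2),(1,0),(1,1),(1,2),(2,0),(2,1),(2,2)}"

lemma Ecar_L: "(x,y) \<in> Ecar \<Longrightarrow> (x,y) \<in> EcarL"
proof -
  assume "(x,y) \<in> Ecar"
  then have "x \<in> {0,1,2}" "y \<in> {0,1,2}" by (auto simp: Ecar_def)
  then show ?thesis by (auto simp: EcarL_def)
qed

definition lineE :: "int \<times> int \<Rightarrow> eE \<Rightarrow> bool" where
  "lineE l e \<longleftrightarrow> (fst e * snd l - snd e * fst l) mod 3 = 0"

definition linesL :: "(int \<times> int) set" where
  "linesL = {(1,0),(0,1),(1,1),(1,2)}"

definition gok :: "autE set \<Rightarrow> eE \<Rightarrow> bool" where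
  "gok K e \<longleftrightarrow> (\<forall>l\<in>linesL. \<exists>\<alpha>\<in>K. \<not> lineE l (appE \<alpha> e))"

definition finprop :: "autE set \<Rightarrow> bool" where
  "finprop K \<longleftrightarrow> (\<forall>e\<in>EcarL. \<forall>e'\<in>EcarL. gok K e \<longrightarrow> gok K e' \<longrightarrow>
      (\<exists>\<gamma>\<in>K. \<exists>\<epsilon>\<in>{1::int,2}. e' = appE \<gamma> (scalE \<epsilon> e)))"

definition A6 :: "eE set" where "A6 = {(1,0),(2,0),(0,1),(0,2)}"
definition B6 :: "eE set" where "B6 = {(1,1),(1,2),(2,1),(2,2)}"

lemma fin2: "finprop K2L" unfolding finprop_def gok_def lineE_def linesL_def EcarL_def K2L_def by code_simp
lemma fin3: "finprop K3L" unfolding finprop_def gok_def lineE_def linesL_def EcarL_def K3L_def by code_simp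
lemma fin4: "finprop K4L" unfolding finprop_def gok_def lineE_def linesL_def EcarL_def K4L_def by code_simp
lemma fin9: "finprop K9L" unfolding finprop_def gok_def lineE_def linesL_def EcarL_def K9L_def by code_simp

lemma fin6: "\<forall>e\<in>EcarL. \<forall>e'\<in>EcarL. gok K6L e \<longrightarrow> gok K6L e' \<longrightarrow>
      \<not> (e \<in> A6 \<and> e' \<in> B6) \<longrightarrow> \<not> (e \<in> B6 \<and> e' \<in> A6) \<longrightarrow>
      (\<exists>\<gamma>\<in>K6L. \<exists>\<epsilon>\<in>{1::int,2}. e' = appE \<gamma> (scalE \<epsilon> e))"
  unfolding gok_def lineE_def linesL_def EcarL_def K6L_def A6_def B6_def by code_simp

lemma c1: "\<forall>\<alpha>\<in>K6L. compE \<alpha> idE = \<alpha>"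
  unfolding K6L_def by code_simp
lemma c2: "\<forall>\<beta>\<in>K6L. \<forall>\<kappa>\<in>K06L. \<forall>e\<in>A6. appE (compE \<beta> \<kappa>) e = appE \<beta> e \<or> appE (compE \<beta> \<kappa>) e = scalE 2 (appE \<beta> e)"
  unfolding K6L_def K06L_def A6_def by code_simp
lemma c3a: "\<forall>\<beta>\<in>K6L. \<forall>\<kappa>\<in>K06L. \<forall>\<kappa>'\<in>K06L. \<exists>\<kappa>''\<in>K06L. compE (compE \<beta> \<kappa>) \<kappa>' = compE \<beta> \<kappa>''"
  unfolding K6L_def K06L_def by code_simp
lemma c3b: "\<forall>\<beta>\<in>K6L. \<forall>\<kappa>\<in>K06L. \<forall>\<kappa>''\<in>K06L. \<exists>\<kappa>'\<in>K06L. compE \<beta> \<kappa>'' = compE (compE \<beta> \<kappa>) \<kappa>'"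
  unfolding K6L_def K06L_def by code_simp
lemma c4: "\<forall>\<beta>\<in>K6L. \<forall>e\<in>B6. \<forall>e'\<in>B6. \<exists>\<kappa>\<in>K06L. appE (compE \<beta> \<kappa>) e = e'"
  unfolding K6L_def K06L_def B6_def by code_simp
lemma c5: "\<forall>x\<in>K6L. \<forall>y\<in>K6L. compE x y \<in> K6L"
  unfolding K6L_def by code_simp
lemma c6: "K06L \<subseteq> K6L" "idE \<in> K06L"
  unfolding K6L_def K06L_def idE_def by auto
lemma c7: "A6 \<subseteq> EcarL" "B6 \<subseteq> EcarL" "card B6 = 4"
  unfolding A6_def B6_def EcarL_def by auto



lemma lineE_add:
  assumes "lineE l u" "lineE l v"
  shows "lineE l ((fst u + fst v) mod 3, (snd u + snd v) mod 3)"
proof -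
  obtain a b where l: "l = (a,b)" by (cases l)
  obtain x y where u: "u = (x,y)" by (cases u)
  obtain x' y' where v: "v = (x',y')" by (cases v)
  have h1: "(x*b - y*a) mod 3 = 0" "(x'*b - y'*a) mod 3 = 0" using assms by (auto simp: lineE_def l u v)
  have e1: "((x + x') mod 3 * b) mod 3 = ((x + x') * b) mod 3" by (rule mod_mult_left_eq)
  have e2: "((y + y') mod 3 * a) mod 3 = ((y + y') * a) mod 3" by (rule mod_mult_left_eq)
  have "(((x + x') mod 3) * b - ((y + y') mod 3) * a) mod 3
      = (((x + x') mod 3 * b) mod 3 - ((y + y') mod 3 * a) mod 3) mod 3" by (rule mod_diff_eq[symmetric])
  also have "\<dots> = (((x + x') * b) mod 3 - ((y + y') * a) mod 3) mod 3" by (simp only: e1 e2)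
  also have "\<dots> = ((x + x') * b - (y + y') * a) mod 3" by (rule mod_diff_eq)
  also have "(x + x') * b - (y + y') * a = (x*b - y*a) + (x'*b - y'*a)" by (simp add: algebra_simps)
  also have "((x*b - y*a) + (x'*b - y'*a)) mod 3 = 0" using h1 by (simp add: mod_add_eq[symmetric])
  finally show ?thesis by (simp add: lineE_def l u v)
qed

lemma gen_gok:
  assumes p: "p > 0" and gen: "gen p (orb p Wg g) = Gcar p" and Wk: "\<forall>w\<in>Wg. fst w \<in> K"
    and g: "g = (x,y,z)"
  shows "gok K (x,y)"
proof (rule ccontr)
  assume "\<not> gok K (x,y)"
  then obtain l where l: "l \<in> linesL" "\<forall>\<alpha>\<in>K. lineE l (appE \<alpha> (x,y))" unfolding gok_def by blast
  define C where "C = {h::elt. lineE l (fst h, fst (snd h))}"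
  have "gen p (orb p Wg g) \<subseteq> C"
  proof (rule gen_closed)
    show "gunit \<in> C" by (simp add: C_def gunit_def lineE_def)
    show "\<forall>g\<in>C. \<forall>h\<in>C. gmul p g h \<in> C"
      using lineE_add[of l] by (auto simp: C_def gmul_def)
    show "orb p Wg g \<subseteq> C"
      using Wk l(2) by (auto simp: C_def orb_def actW_def g Let_def)
  qed
  then have sub: "Gcar p \<subseteq> C" using gen by simp
  have "(0,1,0) \<in> Gcar p" "(1,0,0) \<in> Gcar p" using p by (auto simp: Gcar_def)
  then show False using sub l(1) by (auto simp: C_def linesL_def lineE_def)
qed

lemma gen_z:
  assumes p: "p > 1" and gen: "gen p (orb p Wg g) = Gcar p" and g: "g = (x,y,z)"
  shows "z \<noteq> 0"
proof
  assume z: "z = 0"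
  define C where "C = {h::elt. snd (snd h) = 0}"
  have "gen p (orb p Wg g) \<subseteq> C"
  proof (rule gen_closed)
    show "gunit \<in> C" by (simp add: C_def gunit_def)
    show "\<forall>g\<in>C. \<forall>h\<in>C. gmul p g h \<in> C"
      by (auto simp: C_def gmul_def)
    show "orb p Wg g \<subseteq> C"
      by (auto simp: C_def orb_def actW_def g z Let_def)
  qed
  then have sub: "Gcar p \<subseteq> C" using gen by simp
  have "(0,0,1) \<in> Gcar p" using p by (auto simp: Gcar_def)
  then show False using sub by (auto simp: C_def)
qed

lemma W_props:
  assumes "quot_iso p K K0 M M0 \<psi>"
  shows "\<forall>\<alpha>\<in>K. \<exists>n\<in>M. (\<alpha>,n) \<in> W p K K0 M M0 \<psi>"
    and "\<forall>w\<in>W p K K0 M M0 \<psi>. fst w \<in> K"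
    and "\<forall>n\<in>M. \<exists>\<alpha>\<in>K. \<psi> (cosetE K0 \<alpha>) = cosetP p M0 n"
    and "\<And>\<alpha> \<beta>. \<alpha> \<in> K \<Longrightarrow> \<beta> \<in> K \<Longrightarrow> \<psi> (cosetE K0 \<alpha>) = \<psi> (cosetE K0 \<beta>) \<Longrightarrow> cosetE K0 \<alpha> = cosetE K0 \<beta>"
proof -
  have bij: "bij_betw \<psi> (quotE K K0) (quotP p M M0)" using assms by (simp add: quot_iso_def)
  then have img: "\<psi> ` quotE K K0 = quotP p M M0" by (simp add: bij_betw_def)
  show "\<forall>\<alpha>\<in>K. \<exists>n\<in>M. (\<alpha>,n) \<in> W p K K0 M M0 \<psi>"
  proof
    fix \<alpha> assume a: "\<alpha> \<in> K"
    then have "cosetE K0 \<alpha> \<in> quotE K K0" unfolding quotE_def by blast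
    then have "\<psi> (cosetE K0 \<alpha>) \<in> quotP p M M0" using img by blast
    then obtain n where "n \<in> M" "\<psi> (cosetE K0 \<alpha>) = cosetP p M0 n" by (auto simp: quotP_def)
    then show "\<exists>n\<in>M. (\<alpha>,n) \<in> W p K K0 M M0 \<psi>" using a by (auto simp: W_def)
  qed
  show "\<forall>w\<in>W p K K0 M M0 \<psi>. fst w \<in> K" by (auto simp: W_def)
  show "\<forall>n\<in>M. \<exists>\<alpha>\<in>K. \<psi> (cosetE K0 \<alpha>) = cosetP p M0 n"
  proof
    fix n assume "n \<in> M"
    then have "cosetP p M0 n \<in> quotP p M M0" by (auto simp: quotP_def)
    then obtain A where "A \<in> quotE K K0" "\<psi> A = cosetP p M0 n" using img by (metis imageE)
    then show "\<exists>\<alpha>\<in>K. \<psi> (cosetE K0 \<alpha>) = cosetP p M0 n" unfolding quotE_def by blast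
  qed
  fix \<alpha> \<beta> assume "\<alpha> \<in> K" "\<beta> \<in> K" "\<psi> (cosetE K0 \<alpha>) = \<psi> (cosetE K0 \<beta>)"
  moreover have "inj_on \<psi> (quotE K K0)" using bij by (simp add: bij_betw_def)
  moreover have "cosetE K0 \<alpha> \<in> quotE K K0" "cosetE K0 \<beta> \<in> quotE K K0"
    using \<open>\<alpha> \<in> K\<close> \<open>\<beta> \<in> K\<close> unfolding quotE_def by blast+
  ultimately show "cosetE K0 \<alpha> = cosetE K0 \<beta>" by (meson inj_onD)
qed



lemma inj_mult:
  fixes p z :: int
  assumes pr: "prime p" and z: "0 < z" "z < p"
  shows "inj_on (\<lambda>n. (n*z) mod p) {1..p-1}"
proof (rule inj_onI)
  fix n n' assume n: "n \<in> {1..p-1}" "n' \<in> {1..p-1}" and eq: "(n*z) mod p = (n'*z) mod p"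
  then have "p dvd n*z - n'*z" by (simp add: mod_eq_dvd_iff)
  then have "p dvd (n - n')*z" by (simp add: algebra_simps)
  moreover have "\<not> p dvd z" using z not_dvd_range by blast
  ultimately have d: "p dvd (n - n')" using pr by (simp add: prime_dvd_mult_iff)
  show "n = n'"
  proof (rule ccontr)
    assume "n \<noteq> n'"
    then have "\<bar>p\<bar> \<le> \<bar>n - n'\<bar>" using d dvd_imp_le_int by auto
    then show False using n z by auto
  qed
qed

lemma coset_same:
  assumes "\<beta> \<in> K6L" "\<kappa> \<in> K06L"
  shows "cosetE K06L (compE \<beta> \<kappa>) = cosetE K06L \<beta>"
proof
  show "cosetE K06L (compE \<beta> \<kappa>) \<subseteq> cosetE K06L \<beta>"
  proof
    fix x assume "x \<in> cosetE K06L (compE \<beta> \<kappa>)"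
    then obtain k' where "k' \<in> K06L" "x = compE (compE \<beta> \<kappa>) k'" unfolding cosetE_def by blast
    then obtain k'' where "k'' \<in> K06L" "x = compE \<beta> k''" using c3a assms by blast
    then show "x \<in> cosetE K06L \<beta>" unfolding cosetE_def by blast
  qed
  show "cosetE K06L \<beta> \<subseteq> cosetE K06L (compE \<beta> \<kappa>)"
  proof
    fix x assume "x \<in> cosetE K06L \<beta>"
    then obtain k'' where "k'' \<in> K06L" "x = compE \<beta> k''" unfolding cosetE_def by blast
    then obtain k' where "k' \<in> K06L" "x = compE (compE \<beta> \<kappa>) k'" using c3b assms by blast
    then show "x \<in> cosetE K06L (compE \<beta> \<kappa>)" unfolding cosetE_def by blast
  qed
qed

lemma card6:
  fixes p :: int
  assumes pr: "prime p" and Msub: "M \<subseteq> {1..p-1}" and M1: "1 \<in> M"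
    and qi: "quot_iso p K6L K06L M M0 \<psi>"
    and Wd: "Wg = W p K6L K06L M M0 \<psi>"
    and gX: "gX = (x1,y1,z1)" "gX \<in> Gcar p" and gY: "gY = (x2,y2,z2)" "gY \<in> Gcar p"
    and zX: "z1 \<noteq> 0" and zY: "z2 \<noteq> 0" and eA: "(x1,y1) \<in> A6" and eB: "(x2,y2) \<in> B6"
  shows "card (orb p Wg gX) < card (orb p Wg gY)"
proof -
  have p1: "p > 1" using pr prime_gt_1_int by blast
  have finM: "finite M" using Msub finite_subset by blast
  have cM: "card M > 0" using finM M1 card_gt_0_iff by blast
  have r1: "0 < z1" "z1 < p" using gX zX by (auto simp: Gcar_def)
  have r2: "0 < z2" "z2 < p" using gY zY by (auto simp: Gcar_def)
  note WP = W_props[OF qi]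
  define Mz where "Mz = (\<lambda>n. (n*z2) mod p) ` M"
  have cMz: "card Mz = card M"
    unfolding Mz_def using inj_on_subset[OF inj_mult[OF pr r2] Msub] by (rule card_image)
  define R where "R = (\<lambda>(e::eE, t::int). (fst e, snd e, t)) ` (B6 \<times> Mz)"
  have cR: "card R = 4 * card M"
  proof -
    have "inj_on (\<lambda>(e::eE, t::int). (fst e, snd e, t)) (B6 \<times> Mz)"
      by (auto simp: inj_on_def)
    then have "card R = card (B6 \<times> Mz)" unfolding R_def by (rule card_image)
    also have "\<dots> = 4 * card M" using c7 cMz by (simp add: card_cartesian_product)
    finally show ?thesis .
  qed
  have RY: "R \<subseteq> orb p Wg gY"
  proof
    fix r assume "r \<in> R"
    then obtain e n where e: "e \<in> B6" "n \<in> M" "r = (fst e, snd e, (n*z2) mod p)"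
      unfolding R_def Mz_def by auto
    obtain \<alpha>0 where a0: "\<alpha>0 \<in> K6L" "\<psi> (cosetE K06L \<alpha>0) = cosetP p M0 n" using WP(3) e(2) by blast
    obtain \<kappa> where k: "\<kappa> \<in> K06L" "appE (compE \<alpha>0 \<kappa>) (x2,y2) = e" using c4 a0(1) eB e(1) by blast
    have bK: "compE \<alpha>0 \<kappa> \<in> K6L" using c5 c6 a0(1) k(1) by blast
    have "\<psi> (cosetE K06L (compE \<alpha>0 \<kappa>)) = cosetP p M0 n" using coset_same[OF a0(1) k(1)] a0(2) by simp
    then have inW: "(compE \<alpha>0 \<kappa>, n) \<in> Wg" using bK e(2) by (simp add: Wd W_def)
    have "actW p (compE \<alpha>0 \<kappa>, n) gY = r" using k(2) e(3) by (simp add: actW_def gY Let_def)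
    then show "r \<in> orb p Wg gY" using inW unfolding orb_def by blast
  qed
  have finY: "finite (orb p Wg gY)" using orb_sub[of p] p1 Gcar_finite finite_subset by (metis zero_less_one less_trans)
  have lowY: "4 * card M \<le> card (orb p Wg gY)" using card_mono[OF finY RY] cR by simp
  define sel where "sel n = (SOME \<alpha>. \<alpha> \<in> K6L \<and> \<psi> (cosetE K06L \<alpha>) = cosetP p M0 n)" for n
  define hh where "hh = (\<lambda>(\<epsilon>::int, n::int). let v = appE (sel n) (x1,y1);
      v' = (if \<epsilon> = 1 then v else scalE 2 v) in (fst v', snd v', (n*z1) mod p))"
  have XU: "orb p Wg gX \<subseteq> hh ` ({1,2} \<times> M)"
  proof
    fix r assume "r \<in> orb p Wg gX"
    then obtain \<alpha> n where w: "(\<alpha>,n) \<in> Wg" "r = actW p (\<alpha>,n) gX" unfolding orb_def by auto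
    then have an: "\<alpha> \<in> K6L" "n \<in> M" "\<psi> (cosetE K06L \<alpha>) = cosetP p M0 n" by (auto simp: Wd W_def)
    have s: "sel n \<in> K6L \<and> \<psi> (cosetE K06L (sel n)) = cosetP p M0 n"
      unfolding sel_def by (rule someI[of _ \<alpha>]) (use an in simp)
    then have "cosetE K06L \<alpha> = cosetE K06L (sel n)" using WP(4) an by metis
    moreover have "\<alpha> \<in> cosetE K06L \<alpha>" using c1 c6 an(1) unfolding cosetE_def by (metis (mono_tags, lifting) mem_Collect_eq)
    ultimately obtain \<kappa> where k: "\<kappa> \<in> K06L" "\<alpha> = compE (sel n) \<kappa>" unfolding cosetE_def by auto
    then have "appE \<alpha> (x1,y1) = appE (sel n) (x1,y1) \<or> appE \<alpha> (x1,y1) = scalE 2 (appE (sel n) (x1,y1))"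
      using c2 s eA by blast
    then have "r = hh (1,n) \<or> r = hh (2,n)"
      using w(2) by (auto simp: hh_def actW_def gX Let_def)
    then show "r \<in> hh ` ({1,2} \<times> M)" using an(2) by blast
  qed
  have "card (orb p Wg gX) \<le> card (hh ` ({1,2} \<times> M))"
    using XU finM by (intro card_mono) auto
  also have "\<dots> \<le> card ({1::int,2} \<times> M)" using finM by (intro card_image_le) auto
  also have "\<dots> = 2 * card M" by (simp add: card_cartesian_product)
  finally have "card (orb p Wg gX) \<le> 2 * card M" .
  then show ?thesis using lowY cM by linarith
qed



lemma i_cases:
  assumes "i \<in> {1..11::nat} - {1,7,8}"
  shows "i = 2 \<or> i = 3 \<or> i = 4 \<or> i = 5 \<or> i = 6 \<or> i = 9 \<or> i = 10 \<or> i = 11"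
proof -
  have "1 \<le> i" "i \<le> 11" "i \<noteq> 1" "i \<noteq> 7" "i \<noteq> 8" using assms by auto
  then show ?thesis by presburger
qed

lemma finprop_use:
  assumes "finprop K" "e \<in> EcarL" "e' \<in> EcarL" "gok K e" "gok K e'"
  shows "\<exists>\<gamma>\<in>K. \<exists>\<epsilon>\<in>{1::int,2}. e' = appE \<gamma> (scalE \<epsilon> e)"
  using assms unfolding finprop_def by blast

lemma get_gamma:
  fixes p :: int
  assumes pr: "prime p" and i: "i \<in> {1..11} - {1,7,8}"
    and Msub: "M \<subseteq> {1..p-1}" and M1: "1 \<in> M"
    and qi: "quot_iso p (fst (KK0 i)) (snd (KK0 i)) M M0 \<psi>"
    and Wd: "Wg = W p (fst (KK0 i)) (snd (KK0 i)) M M0 \<psi>"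
    and gX: "gX = (x1,y1,z1)" "gX \<in> Gcar p" and gY: "gY = (x2,y2,z2)" "gY \<in> Gcar p"
    and zX: "z1 \<noteq> 0" and zY: "z2 \<noteq> 0"
    and oX: "gok (fst (KK0 i)) (x1,y1)" and oY: "gok (fst (KK0 i)) (x2,y2)"
    and cards: "card (orb p Wg gX) = card (orb p Wg gY)"
  shows "\<exists>\<gamma>\<in>fst (KK0 i). \<exists>\<epsilon>\<in>{1::int,2}. (x2,y2) = appE \<gamma> (scalE \<epsilon> (x1,y1))"
proof -
  have e1: "(x1,y1) \<in> EcarL" using gX by (intro Ecar_L) (auto simp: Gcar_def Ecar_def)
  have e2: "(x2,y2) \<in> EcarL" using gY by (intro Ecar_L) (auto simp: Gcar_def Ecar_def)
  have "i = 2 \<or> i = 3 \<or> i = 4 \<or> i = 5 \<or> i = 6 \<or> i = 9 \<or> i = 10 \<or> i = 11" using i by (rule i_cases)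
  then show ?thesis
  proof (elim disjE)
    assume ii: "i = 2"
    show ?thesis using finprop_use[OF fin2 e1 e2] oX oY unfolding ii KK0_2 by blast
  next
    assume ii: "i = 3"
    show ?thesis using finprop_use[OF fin3 e1 e2] oX oY unfolding ii KK0_3 by blast
  next
    assume ii: "i = 4"
    show ?thesis using finprop_use[OF fin4 e1 e2] oX oY unfolding ii KK0_4 by blast
  next
    assume ii: "i = 5"
    show ?thesis using finprop_use[OF fin4 e1 e2] oX oY unfolding ii KK0_5 by blast
  next
    assume "i = 6"
    note ii = this
    have n1: "\<not> ((x1,y1) \<in> A6 \<and> (x2,y2) \<in> B6)"
    proof
      assume "(x1,y1) \<in> A6 \<and> (x2,y2) \<in> B6"
      then have "card (orb p Wg gX) < card (orb p Wg gY)"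
        using card6[OF pr Msub M1 _ _ gX gY zX zY] qi Wd ii KK0_6 by auto
      then show False using cards by simp
    qed
    have n2: "\<not> ((x1,y1) \<in> B6 \<and> (x2,y2) \<in> A6)"
    proof
      assume "(x1,y1) \<in> B6 \<and> (x2,y2) \<in> A6"
      then have "card (orb p Wg gY) < card (orb p Wg gX)"
        using card6[OF pr Msub M1 _ _ gY gX zY zX] qi Wd ii KK0_6 by auto
      then show False using cards by simp
    qed
    show ?thesis using fin6 e1 e2 oX oY n1 n2 ii KK0_6 by auto
  next
    assume ii: "i = 9"
    show ?thesis using finprop_use[OF fin9 e1 e2] oX oY unfolding ii KK0_9 by blast
  next
    assume ii: "i = 10"
    show ?thesis using finprop_use[OF fin9 e1 e2] oX oY unfolding ii KK0_10 by blast
  next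
    assume ii: "i = 11"
    show ?thesis using finprop_use[OF fin9 e1 e2] oX oY unfolding ii KK0_11 by blast
  qed
qed

theorem lemma3p6:
  fixes p :: int and S :: "elt set set" and i :: nat and M :: "int set" and X Y :: "elt set"
  assumes "prime p" and "p \<ge> 5"
    and "is_Sring p S"
    and "i \<in> {1..11} - {1,7,8}"
    and "AutP_subgroup p M" and "Ai_well_defined p i M"
    and "cay_iso_Ai p S i M"
    and "X \<in> S" and "Y \<in> S"
    and "gen p X = Gcar p" and "gen p Y = Gcar p"
    and "card X = card Y"
  shows "rat_conj p X Y"
proof -
  note pr = assms(1) and p5 = assms(2) and SR = assms(3) and i = assms(4)
  have p0: "p > 0" "p > 1" using p5 by auto
  obtain f T where f: "gaut p f" "Ai_basic p i M T" "(\<lambda>X. f ` X) ` S = T"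
    using assms(7) unfolding cay_iso_Ai_def by blast
  define K where "K = fst (KK0 i)"
  define K0 where "K0 = snd (KK0 i)"
  obtain M0 \<psi> where m0: "quot_iso p K K0 M M0 \<psi>" "T = Cyc p (W p K K0 M M0 \<psi>)"
    using f(2) unfolding Ai_basic_def K_def K0_def by blast
  define Wg where "Wg = W p K K0 M M0 \<psi>"
  have Msub: "M \<subseteq> {1..p-1}" and M1: "1 \<in> M" using assms(5) by (auto simp: AutP_subgroup_def)
  have Ssub: "\<forall>A\<in>S. A \<subseteq> Gcar p" and Sdisj: "\<forall>A\<in>S. \<forall>B\<in>S. A \<noteq> B \<longrightarrow> A \<inter> B = {}"
    using SR unfolding is_Sring_def by auto
  have finj: "inj_on f (Gcar p)" and fsurj: "f ` Gcar p = Gcar p"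
    using f(1) unfolding gaut_def bij_betw_def by auto
  have TC: "T = Cyc p Wg" using m0(2) by (simp add: Wg_def)
  have disj: "\<forall>A\<in>Cyc p Wg. \<forall>B\<in>Cyc p Wg. A \<inter> B \<noteq> {} \<longrightarrow> A = B"
  proof (intro ballI impI)
    fix A B assume AB: "A \<in> Cyc p Wg" "B \<in> Cyc p Wg" "A \<inter> B \<noteq> {}"
    obtain A1 where A1: "A1 \<in> S" "A = f ` A1" using AB(1) f(3) TC by blast
    obtain B1 where B1: "B1 \<in> S" "B = f ` B1" using AB(2) f(3) TC by blast
    show "A = B"
    proof (cases "A1 = B1")
      case True then show ?thesis using A1 B1 by simp
    next
      case False
      then have "A1 \<inter> B1 = {}" using Sdisj A1 B1 by blast
      then have "f ` A1 \<inter> f ` B1 = {}"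
        using finj Ssub A1(1) B1(1) by (metis image_empty inj_on_image_Int)
      then show ?thesis using AB A1 B1 by simp
    qed
  qed
  have XG: "X \<subseteq> Gcar p" "Y \<subseteq> Gcar p" using Ssub assms(8,9) by auto
  have "f ` X \<in> Cyc p Wg" using f(3) TC assms(8) by blast
  then obtain gX where gX: "gX \<in> Gcar p" "f ` X = orb p Wg gX" unfolding Cyc_orb by blast
  have "f ` Y \<in> Cyc p Wg" using f(3) TC assms(9) by blast
  then obtain gY where gY: "gY \<in> Gcar p" "f ` Y = orb p Wg gY" unfolding Cyc_orb by blast
  have genf: "gen p (f ` Z) = Gcar p" if "Z \<subseteq> Gcar p" "gen p Z = Gcar p" for Z
  proof
    have "f ` Z \<subseteq> f ` Gcar p" using that(1) by (rule image_mono)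
    then have "f ` Z \<subseteq> Gcar p" using fsurj by simp
    then show "gen p (f ` Z) \<subseteq> Gcar p" by (rule gen_sub[OF p0(1)])
    have "f ` gen p Z \<subseteq> gen p (f ` Z)" by (rule gaut_gen[OF p0(1) f(1) that(1)])
    then show "Gcar p \<subseteq> gen p (f ` Z)" using that(2) fsurj by simp
  qed
  have genX: "gen p (orb p Wg gX) = Gcar p" using genf[OF XG(1) assms(10)] gX by simp
  have genY: "gen p (orb p Wg gY) = Gcar p" using genf[OF XG(2) assms(11)] gY by simp
  have cardXY: "card (orb p Wg gX) = card (orb p Wg gY)"
  proof -
    have "card (f ` X) = card X" using finj XG(1) by (metis card_image inj_on_subset)
    moreover have "card (f ` Y) = card Y" using finj XG(2) by (metis card_image inj_on_subset)
    ultimately show ?thesis using gX gY assms(12) by simp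
  qed
  obtain x1 y1 z1 where gX3: "gX = (x1,y1,z1)" by (cases gX) auto
  obtain x2 y2 z2 where gY3: "gY = (x2,y2,z2)" by (cases gY) auto
  have WP: "\<forall>\<alpha>\<in>K. \<exists>n\<in>M. (\<alpha>,n) \<in> Wg" "\<forall>w\<in>Wg. fst w \<in> K"
    using W_props[OF m0(1)] by (simp_all add: Wg_def)
  have z1: "z1 \<noteq> 0" using gen_z[OF p0(2) genX gX3] .
  have z2: "z2 \<noteq> 0" using gen_z[OF p0(2) genY gY3] .
  have o1: "gok K (x1,y1)" using gen_gok[OF p0(1) genX WP(2) gX3] .
  have o2: "gok K (x2,y2)" using gen_gok[OF p0(1) genY WP(2) gY3] .
  obtain \<gamma> \<epsilon> where ge: "\<gamma> \<in> K" "\<epsilon> \<in> {1::int,2}" "(x2,y2) = appE \<gamma> (scalE \<epsilon> (x1,y1))"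
    using get_gamma[OF pr i Msub M1 m0(1)[unfolded K_def K0_def] Wg_def[unfolded K_def K0_def]
        gX3 gX(1) gY3 gY(1) z1 z2 o1[unfolded K_def] o2[unfolded K_def] cardXY]
    unfolding K_def by blast
  have idK: "idE \<in> K"
  proof -
    have "i = 2 \<or> i = 3 \<or> i = 4 \<or> i = 5 \<or> i = 6 \<or> i = 9 \<or> i = 10 \<or> i = 11" using i by (rule i_cases)
    then show ?thesis unfolding K_def
      by (elim disjE) (simp_all add: KK0_2 KK0_3 KK0_4 KK0_5 KK0_6 KK0_9 KK0_10 KK0_11
          K2L_def K3L_def K4L_def K6L_def K9L_def idE_def)
  qed
  obtain m where m: "m \<ge> 0" "coprime m (9*p)" "orb p Wg gY = gpow p m ` orb p Wg gX"
    using main_T[OF pr p5 Msub WP(1) idK disj gX3 gX(1) gY3 gY(1) z1 z2 ge] by blast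
  have powf: "f (gpow p m x) = gpow p m (f x)" if "x \<in> Gcar p" for x
    using gaut_pow[OF p0(1) f(1) that, of "nat m"] m(1) by simp
  have "f ` Y = f ` (gpow p m ` X)"
  proof -
    have "f ` (gpow p m ` X) = (\<lambda>x. f (gpow p m x)) ` X" by (simp add: image_image)
    also have "\<dots> = (\<lambda>x. gpow p m (f x)) ` X" using powf XG(1) by (intro image_cong) auto
    also have "\<dots> = gpow p m ` (f ` X)" by (simp add: image_image)
    finally have "f ` (gpow p m ` X) = gpow p m ` (f ` X)" .
    then show ?thesis using gX gY m(3) by simp
  qed
  moreover have "gpow p m ` X \<subseteq> Gcar p" using gpow_in[OF p0(1)] by blast
  ultimately have "Y = gpow p m ` X" using finj XG(2) by (simp add: inj_on_image_eq_iff)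
  moreover have "coprime m (int (card (Gcar p)))" using m(2) Gcar_card[OF p0(1)] by simp
  ultimately show ?thesis unfolding rat_conj_def by blast
qed


end
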